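(* Let $T\in\mathbb{R}^{m\times m}$ be symmetric with eigendecomposition $T=Q\Lambda Q^\top$, $\Lambda=\operatorname{diag}(\lambda_1,\ldots,\lambda_m)$, let $f$ be continuously differentiable on an open interval containing the $\lambda_i$, let $u\in\mathbb{R}^n$ be nonzero, $c=Q^\top e_1$, $F$ the divided-difference matrix with $F_{ij}=\frac{f(\lambda_i)-f(\lambda_j)}{\lambda_i-\lambda_j}$ if $\lambda_i\neq\lambda_j$ and $F_{ij}=f'(\lambda_i)$ otherwise, and $G=\|u\|^2Q((cc^\top)\circ F)Q^\top$. If $S\in\mathbb{R}^{m\times m}$ satisfies $S^\top=-S$ and $Se_1=0$, then $\operatorname{tr}(G^\top[T,S])=0$, where $[T,S]=TS-ST$.
   Context: $\circ$ denotes the Hadamard product and $e_1$ the first standard basis vector of $\mathbb{R}^m$. *)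

theory Defs
  imports Complex_Main "Jordan_Normal_Form.Matrix"
begin

definition mat_trace :: "'a::comm_ring_1 mat \<Rightarrow> 'a" where
  "mat_trace A = (\<Sum>i<dim_row A. A $$ (i, i))"

definition hadamard :: "'a::times mat \<Rightarrow> 'a mat \<Rightarrow> 'a mat" where
  "hadamard A B = mat (dim_row A) (dim_col A) (\<lambda>(i, j). A $$ (i, j) * B $$ (i, j))"

definition outer_prod :: "'a::times vec \<Rightarrow> 'a vec \<Rightarrow> 'a mat" where
  "outer_prod x y = mat (dim_vec x) (dim_vec y) (\<lambda>(i, j). x $ i * y $ j)"

definition divided_diff_mat :: "nat \<Rightarrow> (real \<Rightarrow> real) \<Rightarrow> (real \<Rightarrow> real) \<Rightarrow> (nat \<Rightarrow> real) \<Rightarrow> real mat" where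
  "divided_diff_mat m f f' lam = mat m m (\<lambda>(i, j).
     if lam i \<noteq> lam j then (f (lam i) - f (lam j)) / (lam i - lam j) else f' (lam i))"

end

theory Submission
  imports Defs
begin

lemma mat_trace_comm:
  fixes A B :: "'a::comm_ring_1 mat"
  assumes "A \<in> carrier_mat n k" "B \<in> carrier_mat k n"
  shows "mat_trace (A * B) = mat_trace (B * A)"
proof -
  have "mat_trace (A * B) = (\<Sum>i<n. \<Sum>j<k. A $$ (i,j) * B $$ (j,i))"
    using assms by (simp add: mat_trace_def scalar_prod_def lessThan_atLeast0)
  also have "\<dots> = (\<Sum>j<k. \<Sum>i<n. B $$ (j,i) * A $$ (i,j))"
    by (subst sum.swap) (simp add: mult.commute)
  also have "\<dots> = mat_trace (B * A)"
    using assms by (simp add: mat_trace_def scalar_prod_def lessThan_atLeast0)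
  finally show ?thesis .
qed

lemma mat_trace_minus:
  fixes A B :: "'a::comm_ring_1 mat"
  assumes "A \<in> carrier_mat n n" "B \<in> carrier_mat n n"
  shows "mat_trace (A - B) = mat_trace A - mat_trace B"
  using assms by (simp add: mat_trace_def sum_subtractf)

lemma mat_trace_smult:
  fixes A :: "'a::comm_ring_1 mat"
  assumes "A \<in> carrier_mat n n"
  shows "mat_trace (k \<cdot>\<^sub>m A) = k * mat_trace A"
  using assms by (simp add: mat_trace_def sum_distrib_left)

lemma mat_trace_outer:
  fixes A :: "'a::comm_ring_1 mat"
  assumes "x \<in> carrier_vec n" "y \<in> carrier_vec n" "A \<in> carrier_mat n n"
  shows "mat_trace (outer_prod x y * A) = y \<bullet> (A *\<^sub>v x)"
proof -
  have "mat_trace (outer_prod x y * A) = (\<Sum>i<n. \<Sum>j<n. x $ i * y $ j * A $$ (j,i))"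
    using assms by (simp add: mat_trace_def scalar_prod_def lessThan_atLeast0 outer_prod_def)
  also have "\<dots> = (\<Sum>j<n. \<Sum>i<n. y $ j * (A $$ (j,i) * x $ i))"
    by (subst sum.swap) (simp add: ac_simps)
  also have "\<dots> = y \<bullet> (A *\<^sub>v x)"
    using assms by (simp add: scalar_prod_def lessThan_atLeast0 sum_distrib_left)
  finally show ?thesis .
qed

theorem lemma2:
  fixes m n :: nat and T Q S :: "real mat" and lam :: "nat \<Rightarrow> real"
    and f f' :: "real \<Rightarrow> real" and a b :: real and u :: "real vec"
  assumes m_pos: "0 < m"
    and T_carr: "T \<in> carrier_mat m m" and T_sym: "transpose_mat T = T"
    and Q_carr: "Q \<in> carrier_mat m m"
    and Q_orth1: "transpose_mat Q * Q = 1\<^sub>m m" and Q_orth2: "Q * transpose_mat Q = 1\<^sub>m m"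
    and T_eig: "T = Q * mat_diag m lam * transpose_mat Q"
    and lam_in: "\<forall>i<m. lam i \<in> {a<..<b}"
    and f_deriv: "\<forall>x\<in>{a<..<b}. (f has_real_derivative f' x) (at x)"
    and f'_cont: "continuous_on {a<..<b} f'"
    and u_carr: "u \<in> carrier_vec n" and u_nz: "u \<noteq> 0\<^sub>v n"
    and S_carr: "S \<in> carrier_mat m m" and S_skew: "transpose_mat S = - S"
    and S_e1: "S *\<^sub>v unit_vec m 0 = 0\<^sub>v m"
  defines "G \<equiv> (u \<bullet> u) \<cdot>\<^sub>m (Q * hadamard (outer_prod (transpose_mat Q *\<^sub>v unit_vec m 0) (transpose_mat Q *\<^sub>v unit_vec m 0)) (divided_diff_mat m f f' lam) * transpose_mat Q)"
  shows "mat_trace (transpose_mat G * (T * S - S * T)) = 0"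
proof -
  define Qt where "Qt = transpose_mat Q"
  define e :: "real vec" where "e = unit_vec m 0"
  define c where "c = Qt *\<^sub>v e"
  define D where "D = mat_diag m lam"
  define H where "H = hadamard (outer_prod c c) (divided_diff_mat m f f' lam)"
  define Ht where "Ht = transpose_mat H"
  define w where "w = vec m (\<lambda>i. c $ i * f (lam i))"
  define S' where "S' = Qt * S * Q"
  define k where "k = u \<bullet> u"
  have Qt: "Qt \<in> carrier_mat m m" using Q_carr by (simp add: Qt_def)
  have e: "e \<in> carrier_vec m" by (simp add: e_def)
  have c: "c \<in> carrier_vec m" using Qt e by (simp add: c_def)
  have D: "D \<in> carrier_mat m m" by (simp add: D_def)
  have H: "H \<in> carrier_mat m m" using c by (simp add: H_def hadamard_def outer_prod_def)
  have Ht: "Ht \<in> carrier_mat m m" using H by (simp add: Ht_def)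
  have w: "w \<in> carrier_vec m" by (simp add: w_def)
  have S': "S' \<in> carrier_mat m m" using Qt S_carr Q_carr by (simp add: S'_def)
  have QtQ: "Qt * Q = 1\<^sub>m m" using Q_orth1 by (simp add: Qt_def)
  have QQt: "Q * Qt = 1\<^sub>m m" using Q_orth2 by (simp add: Qt_def)
  have key: "Ht * D - D * Ht = outer_prod c w - outer_prod w c"
  proof (rule eq_matI)
    fix i j assume ij: "i < dim_row (outer_prod c w - outer_prod w c)" "j < dim_col (outer_prod c w - outer_prod w c)"
    hence ij': "i < m" "j < m" using c w by (auto simp: outer_prod_def)
    have l: "(Ht * D - D * Ht) $$ (i,j) = c $ j * c $ i * (if lam j \<noteq> lam i then (f (lam j) - f (lam i)) / (lam j - lam i) else f' (lam j)) * (lam j - lam i)"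
    proof -
      have a1: "Ht * D = mat m m (\<lambda>(i,j). Ht $$ (i,j) * lam j)" unfolding D_def by (rule mat_diag_mult_right[OF Ht])
      have a2: "D * Ht = mat m m (\<lambda>(i,j). lam i * Ht $$ (i,j))" unfolding D_def by (rule mat_diag_mult_left[OF Ht])
      have a3: "Ht $$ (i,j) = c $ j * c $ i * (if lam j \<noteq> lam i then (f (lam j) - f (lam i)) / (lam j - lam i) else f' (lam j))"
        using ij' c by (simp add: Ht_def H_def hadamard_def outer_prod_def divided_diff_mat_def)
      show ?thesis unfolding a1 a2 using ij' by (simp add: a3 algebra_simps)
    qed
    have r: "(outer_prod c w - outer_prod w c) $$ (i,j) = c $ i * (c $ j * f (lam j)) - c $ i * f (lam i) * c $ j"
      using ij' c w by (simp add: outer_prod_def w_def)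
    show "(Ht * D - D * Ht) $$ (i,j) = (outer_prod c w - outer_prod w c) $$ (i,j)"
      unfolding l r by (cases "lam j = lam i") (auto simp: field_simps)
  qed (use Ht D c w in \<open>auto simp: outer_prod_def\<close>)
  have trsm: "transpose_mat (x \<cdot>\<^sub>m A) = x \<cdot>\<^sub>m transpose_mat A" for x :: real and A
    by (rule eq_matI) auto
  have GT: "transpose_mat G = k \<cdot>\<^sub>m (Q * Ht * Qt)"
    unfolding G_def trsm k_def Qt_def[symmetric] e_def[symmetric] c_def[symmetric] H_def[symmetric]
    using Q_carr Qt H
    by (simp add: transpose_mult[of _ m m _ m] Ht_def Qt_def assoc_mult_mat[of _ m m _ m _ m])
  have Tq: "T = Q * D * Qt" using T_eig by (simp add: D_def Qt_def)
  have TS: "T \<in> carrier_mat m m" by (rule T_carr)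
  have E1: "Q * Ht * Qt * (T * S) = Q * (Ht * D * Qt * S)"
  proof -
    have "Q * Ht * Qt * (T * S) = Q * (Ht * ((Qt * Q) * (D * (Qt * S))))"
      unfolding Tq using Q_carr Qt Ht D S_carr by (simp add: assoc_mult_mat[of _ m m _ m _ m])
    also have "\<dots> = Q * (Ht * D * Qt * S)"
      unfolding QtQ using Q_carr Qt Ht D S_carr by (simp add: assoc_mult_mat[of _ m m _ m _ m])
    finally show ?thesis .
  qed
  have E2: "Q * Ht * Qt * (S * T) = (Q * Ht * Qt * S * Q * D) * Qt"
    unfolding Tq using Q_carr Qt Ht D S_carr by (simp add: assoc_mult_mat[of _ m m _ m _ m])
  have t1: "mat_trace (Q * Ht * Qt * (T * S)) = mat_trace (Ht * D * S')"
  proof -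
    have "mat_trace (Q * Ht * Qt * (T * S)) = mat_trace ((Ht * D * Qt * S) * Q)"
      unfolding E1 using Q_carr Qt Ht D S_carr by (intro mat_trace_comm[of _ m m]) auto
    also have "\<dots> = mat_trace (Ht * D * S')"
      unfolding S'_def using Q_carr Qt Ht D S_carr by (simp add: assoc_mult_mat[of _ m m _ m _ m])
    finally show ?thesis .
  qed
  have t2: "mat_trace (Q * Ht * Qt * (S * T)) = mat_trace (D * Ht * S')"
  proof -
    have "mat_trace (Q * Ht * Qt * (S * T)) = mat_trace (Qt * (Q * Ht * Qt * S * Q * D))"
      unfolding E2 using Q_carr Qt Ht D S_carr by (intro mat_trace_comm[of _ m m]) auto
    also have "Qt * (Q * Ht * Qt * S * Q * D) = (Qt * Q) * (Ht * (Qt * S * Q) * D)"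
      using Q_carr Qt Ht D S_carr by (simp add: assoc_mult_mat[of _ m m _ m _ m])
    also have "\<dots> = (Ht * S') * D" unfolding QtQ S'_def using Ht S' D by simp
    also have "mat_trace \<dots> = mat_trace (D * (Ht * S'))"
      using Ht S' D by (intro mat_trace_comm[of _ m m]) auto
    also have "\<dots> = mat_trace (D * Ht * S')" using Ht S' D by simp
    finally show ?thesis .
  qed
  have S'c: "S' *\<^sub>v c = 0\<^sub>v m"
  proof -
    have "S' *\<^sub>v c = Qt *\<^sub>v (S *\<^sub>v ((Q * Qt) *\<^sub>v e))"
      unfolding S'_def c_def using Q_carr Qt S_carr e by (simp add: assoc_mult_mat_vec[of _ m m _ m])
    also have "\<dots> = 0\<^sub>v m" unfolding QQt e_def using S_e1 Qt by (auto intro!: eq_vecI simp: scalar_prod_def)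
    finally show ?thesis .
  qed
  have S'T: "transpose_mat S' = - S'"
  proof -
    have "transpose_mat S' = Qt * transpose_mat S * Q"
      unfolding S'_def using Q_carr Qt S_carr
      by (simp add: transpose_mult[of _ m m _ m] Qt_def assoc_mult_mat[of _ m m _ m _ m])
    also have "\<dots> = - S'" unfolding S_skew S'_def using Q_carr Qt S_carr by simp
    finally show ?thesis .
  qed
  have cS'w: "c \<bullet> (S' *\<^sub>v w) = 0"
  proof -
    have "c \<bullet> (S' *\<^sub>v w) = (transpose_mat S' *\<^sub>v c) \<bullet> w"
      using transpose_vec_mult_scalar[OF S' w c] by simp
    also have "\<dots> = 0" unfolding S'T using S' c w S'c by simp
    finally show ?thesis .
  qed
  have "mat_trace (transpose_mat G * (T * S - S * T))
      = k * (mat_trace (Q * Ht * Qt * (T * S)) - mat_trace (Q * Ht * Qt * (S * T)))"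
  proof -
    have X: "Q * Ht * Qt \<in> carrier_mat m m" using Q_carr Ht Qt by simp
    have TS': "T * S \<in> carrier_mat m m" "S * T \<in> carrier_mat m m" using T_carr S_carr by auto
    have "transpose_mat G * (T * S - S * T) = k \<cdot>\<^sub>m (Q * Ht * Qt * (T * S) - Q * Ht * Qt * (S * T))"
      unfolding GT mult_smult_assoc_mat[OF X minus_carrier_mat[OF TS'(2)]] mult_minus_distrib_mat[OF X TS'] ..
    moreover have P1: "Q * Ht * Qt * (T * S) \<in> carrier_mat m m" using X TS' by simp
    moreover have P2: "Q * Ht * Qt * (S * T) \<in> carrier_mat m m" using X TS' by simp
    ultimately show ?thesis
      using mat_trace_smult[OF minus_carrier_mat[OF P2], of k "Q * Ht * Qt * (T * S)"] mat_trace_minus[OF P1 P2] by simp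
  qed
  also have "\<dots> = k * (mat_trace (Ht * D * S') - mat_trace (D * Ht * S'))" unfolding t1 t2 ..
  also have "mat_trace (Ht * D * S') - mat_trace (D * Ht * S') = mat_trace ((Ht * D - D * Ht) * S')"
    using Ht D S' by (simp add: minus_mult_distrib_mat[of _ m m] mat_trace_minus[of _ m])
  also have "\<dots> = mat_trace (outer_prod c w * S') - mat_trace (outer_prod w c * S')"
  proof -
    have o1: "outer_prod c w \<in> carrier_mat m m" "outer_prod w c \<in> carrier_mat m m"
      using c w by (auto simp: outer_prod_def)
    have o2: "outer_prod c w * S' \<in> carrier_mat m m" "outer_prod w c * S' \<in> carrier_mat m m"
      using o1 S' by auto
    show ?thesis unfolding key minus_mult_distrib_mat[OF o1 S'] mat_trace_minus[OF o2] ..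
  qed
  also have "\<dots> = 0"
    using c w S' S'c cS'w by (simp add: mat_trace_outer[of _ m])
  finally show ?thesis by simp
qed

end
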